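(* Let $n\ge4$ be even, $p\ge n+1$ an integer, $c_1$ a positive integer, $a_k=pc_k$, $c_{k+1}=p^2c_k$, $\Theta_k=\Theta_{a_k,c_k}$, and $b_{k,i}=|\Theta_1\cdots\Theta_ke_i|$. Then for every $k\ge1$, $$\prod_{j=1}^{k-1}c_j<b_{k,1}<\prod_{j=1}^k 2a_j,\qquad \prod_{j=1}^{k}c_j<b_{k,n}<\prod_{j=1}^k 2a_j.$$
   Context: For positive integers $a,c$, $\Theta_{a,c}$ is the $n\times n$ matrix with row $1=(1,c,\dots,c)$, row $n=(1,c+1,\dots,c+1)$, and for $1\le i\le(n-2)/2$: row $2i$ has $0$ in column 1, $2$ in columns $2i$ and $2i+1$, and $1$ in the other columns among $2,\dots,n$; row $2i+1$ has $a$ in column $2i$, $a+1$ in column $2i+1$, $0$ elsewhere. For a vector $v$, $|v|$ is the sum of its entries; $e_i$ is the $i$-th standard basis vector. *)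

theory Defs
  imports "Jordan_Normal_Form.Matrix"
begin

text \<open>Theta n a c: the n x n integer matrix Theta_{a,c} of the paper.
  The paper uses 1-based indices r,s in {1..n}; JNF matrices are 0-based,
  so entry (i,j) corresponds to row r = i+1, column s = j+1.\<close>
definition Theta :: "nat \<Rightarrow> int \<Rightarrow> int \<Rightarrow> int mat" where
  "Theta n a c = mat n n (\<lambda>(i,j). let r = i + 1; s = j + 1 in
     if r = 1 then (if s = 1 then 1 else c)
     else if r = n then (if s = 1 then 1 else c + 1)
     else if even r then (if s = 1 then 0 else if s = r \<or> s = r + 1 then 2 else 1)
     else (if s = r - 1 then a else if s = r then a + 1 else 0))"

fun thetaProd :: "nat \<Rightarrow> (nat \<Rightarrow> int) \<Rightarrow> (nat \<Rightarrow> int) \<Rightarrow> nat \<Rightarrow> int mat" where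
  "thetaProd n a c 0 = 1\<^sub>m n"
| "thetaProd n a c (Suc k) = thetaProd n a c k * Theta n (a (Suc k)) (c (Suc k))"

definition vsum :: "int vec \<Rightarrow> int" where
  "vsum v = (\<Sum>i<dim_vec v. v $ i)"

text \<open>b_{k,i} = |Theta_1 ... Theta_k e_i| (1-based i, e_i = unit_vec n (i-1)).\<close>
definition bval :: "nat \<Rightarrow> (nat \<Rightarrow> int) \<Rightarrow> (nat \<Rightarrow> int) \<Rightarrow> nat \<Rightarrow> nat \<Rightarrow> int" where
  "bval n a c k i = vsum (thetaProd n a c k *\<^sub>v unit_vec n (i - 1))"

end

theory Submission imports Defs begin

definition th :: "nat \<Rightarrow> int \<Rightarrow> int \<Rightarrow> nat \<Rightarrow> nat \<Rightarrow> int" where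
  "th n a c i j = (let r = i + 1; s = j + 1 in
     if r = 1 then (if s = 1 then 1 else c)
     else if r = n then (if s = 1 then 1 else c + 1)
     else if even r then (if s = 1 then 0 else if s = r \<or> s = r + 1 then 2 else 1)
     else (if s = r - 1 then a else if s = r then a + 1 else 0))"

lemma Theta_idx: "i < n \<Longrightarrow> j < n \<Longrightarrow> Theta n a c $$ (i,j) = th n a c i j"
  unfolding Theta_def th_def by simp

lemma Theta_dim[simp]: "dim_row (Theta n a c) = n" "dim_col (Theta n a c) = n"
  unfolding Theta_def by auto

lemma tp_dim[simp]: "dim_row (thetaProd n a c k) = n" "dim_col (thetaProd n a c k) = n"
  by (induction k) auto

definition R :: "nat \<Rightarrow> (nat \<Rightarrow> int) \<Rightarrow> (nat \<Rightarrow> int) \<Rightarrow> nat \<Rightarrow> nat \<Rightarrow> int" where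
  "R n a c k s = (\<Sum>i<n. thetaProd n a c k $$ (i,s))"

lemma bval_R: "1 \<le> i \<Longrightarrow> i \<le> n \<Longrightarrow> bval n a c k i = R n a c k (i - 1)"
  unfolding bval_def vsum_def R_def
  by (intro sum.cong) (auto simp: row_def)

lemma R0: "s < n \<Longrightarrow> R n a c 0 s = 1"
  unfolding R_def by (simp add: sum.delta)



lemma RSuc: assumes "s < n"
  shows "R n a c (Suc k) s = (\<Sum>j<n. R n a c k j * th n (a (Suc k)) (c (Suc k)) j s)"
proof -
  have "R n a c (Suc k) s = (\<Sum>i<n. \<Sum>j<n. thetaProd n a c k $$ (i,j) * th n (a (Suc k)) (c (Suc k)) j s)"
    unfolding R_def using assms
    by (intro sum.cong refl) (auto simp: scalar_prod_def Theta_idx lessThan_atLeast0 intro!: sum.cong)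
  also have "\<dots> = (\<Sum>j<n. \<Sum>i<n. thetaProd n a c k $$ (i,j) * th n (a (Suc k)) (c (Suc k)) j s)"
    by (rule sum.swap)
  also have "\<dots> = (\<Sum>j<n. R n a c k j * th n (a (Suc k)) (c (Suc k)) j s)"
    unfolding R_def by (simp add: sum_distrib_right)
  finally show ?thesis .
qed

lemma th_col0: "even n \<Longrightarrow> 4 \<le> n \<Longrightarrow> j < n \<Longrightarrow> th n a c j 0 = (if j = 0 \<or> j = n - 1 then 1 else 0)"
  unfolding th_def Let_def by auto

lemma th_nonneg: "even n \<Longrightarrow> 4 \<le> n \<Longrightarrow> j < n \<Longrightarrow> s < n \<Longrightarrow> a \<ge> 0 \<Longrightarrow> c \<ge> 0 \<Longrightarrow> th n a c j s \<ge> 0"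
  unfolding th_def Let_def by auto

lemma th_last: "even n \<Longrightarrow> 4 \<le> n \<Longrightarrow> j < n \<Longrightarrow> c \<ge> 1 \<Longrightarrow> th n a c j (n - 1) \<le> c + 1"
  unfolding th_def Let_def by auto

lemma th_lastlast: "even n \<Longrightarrow> 4 \<le> n \<Longrightarrow> th n a c (n - 1) (n - 1) = c + 1"
  unfolding th_def Let_def by auto

lemma th_upper: "even n \<Longrightarrow> 4 \<le> n \<Longrightarrow> j < n \<Longrightarrow> s < n \<Longrightarrow> a \<ge> 0 \<Longrightarrow> c \<ge> 1 \<Longrightarrow>
  th n a c j s \<le> (if j = 0 then c + 1 else 0) + (if j = n - 1 then c + 1 else 0) + 2
     + (if j = (if even s then s else s + 1) then a + 1 else 0)"
  unfolding th_def Let_def by (auto split: if_splits; presburger)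
lemma col0_sum: assumes "even n" "4 \<le> n"
  shows "(\<Sum>j<n. x j * th n a c j 0) = x 0 + x (n - 1)"
proof -
  have "(\<Sum>j<n. x j * th n a c j 0) = (\<Sum>j<n. (if j = 0 then x j else 0) + (if j = n - 1 then x j else 0))"
    using assms by (intro sum.cong refl) (auto simp: th_col0)
  also have "\<dots> = x 0 + x (n - 1)" using assms by (simp add: sum.distrib)
  finally show ?thesis .
qed

lemma sum_nonneg_x: assumes "even n" "4 \<le> n" "s < n" "a \<ge> 0" "c \<ge> 0" "\<And>j. j < n \<Longrightarrow> x j \<ge> 0"
  shows "(\<Sum>j<n. x j * th n a c j s) \<ge> 0"
  using assms th_nonneg by (intro sum_nonneg) auto

lemma last_lower: assumes "even n" "4 \<le> n" "a \<ge> 0" "c \<ge> 0" "\<And>j. j < n \<Longrightarrow> x j \<ge> 0"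
  shows "(\<Sum>j<n. x j * th n a c j (n - 1)) \<ge> (c + 1) * x (n - 1)"
proof -
  have "(\<Sum>j\<in>{n - 1}. x j * th n a c j (n - 1)) \<le> (\<Sum>j<n. x j * th n a c j (n - 1))"
    using assms th_nonneg by (intro sum_mono2) auto
  moreover have "th n a c (n - 1) (n - 1) = c + 1" using assms th_lastlast by blast
  ultimately show ?thesis by (simp add: mult.commute)
qed

lemma last_upper: assumes "even n" "4 \<le> n" "a \<ge> 0" "c \<ge> 1" "\<And>j. j < n \<Longrightarrow> x j \<ge> 0" "\<And>j. j < n \<Longrightarrow> x j \<le> M"
  shows "(\<Sum>j<n. x j * th n a c j (n - 1)) \<le> M * int n * (c + 1)"
proof -
  have "(\<Sum>j<n. x j * th n a c j (n - 1)) \<le> (\<Sum>j<n. M * (c + 1))"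
  proof (rule sum_mono)
    fix j assume j: "j \<in> {..<n}"
    have t: "th n a c j (n - 1) \<le> c + 1" using assms j th_last by auto
    have t0: "th n a c j (n - 1) \<ge> 0" using assms j th_nonneg[of n j "n-1" a c] by auto
    show "x j * th n a c j (n - 1) \<le> M * (c + 1)"
      using assms(5,6)[of j] j t t0 by (intro mult_mono) auto
  qed
  then show ?thesis by (simp add: mult.commute mult.left_commute)
qed

lemma gen_upper: assumes "even n" "4 \<le> n" "s < n" "a \<ge> 0" "c \<ge> 1" "\<And>j. j < n \<Longrightarrow> x j \<ge> 0" "\<And>j. j < n \<Longrightarrow> x j \<le> M"
  shows "(\<Sum>j<n. x j * th n a c j s) \<le> M * (a + 2 * c + 2 * int n + 3)"
proof -
  define t where "t = (if even s then s else s + 1)"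
  define h where "h j = (if j = 0 then c + 1 else 0) + (if j = n - 1 then c + 1 else 0) + 2
     + (if j = t then a + 1 else 0)" for j
  have M0: "M \<ge> 0" using assms(6,7)[of 0] assms(2) by auto
  have "(\<Sum>j<n. x j * th n a c j s) \<le> (\<Sum>j<n. M * h j)"
  proof (rule sum_mono)
    fix j assume j: "j \<in> {..<n}"
    have tt: "th n a c j s \<le> h j" unfolding h_def t_def using assms j th_upper by auto
    have t0: "th n a c j s \<ge> 0" using assms j th_nonneg[of n j s a c] by auto
    show "x j * th n a c j s \<le> M * h j"
      using assms(6,7)[of j] j tt t0 by (intro mult_mono) auto
  qed
  also have "\<dots> = M * (\<Sum>j<n. h j)" by (simp add: sum_distrib_left)
  also have "(\<Sum>j<n. h j) \<le> a + 2 * c + 2 * int n + 3"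
  proof -
    have "(\<Sum>j<n. h j) = (c + 1) + (c + 1) + 2 * int n + (if t < n then a + 1 else 0)"
      unfolding h_def using assms by (simp add: sum.distrib)
    then show ?thesis using assms by auto
  qed
  then have "M * (\<Sum>j<n. h j) \<le> M * (a + 2 * c + 2 * int n + 3)" using M0 by (intro mult_left_mono) auto
  finally show ?thesis .
qed
lemma prodSuc: "(\<Prod>j = 1..Suc k. f j) = (\<Prod>j = 1..k. f j) * (f (Suc k) :: int)"
  by (simp add: prod.cl_ivl_Suc)

theorem mainTheorem11:
  fixes n :: nat and p :: int and c :: "nat \<Rightarrow> int" and k :: nat
  assumes "even n" and "n \<ge> 4"
    and "p \<ge> int n + 1"
    and "c 1 > 0"
    and "\<And>j. j \<ge> 1 \<Longrightarrow> c (Suc j) = p ^ 2 * c j"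
    and "k \<ge> 1"
  shows "(\<Prod>j = 1..k-1. c j) < bval n (\<lambda>j. p * c j) c k 1
         \<and> bval n (\<lambda>j. p * c j) c k 1 < (\<Prod>j = 1..k. 2 * (p * c j))
         \<and> (\<Prod>j = 1..k. c j) < bval n (\<lambda>j. p * c j) c k n
         \<and> bval n (\<lambda>j. p * c j) c k n < (\<Prod>j = 1..k. 2 * (p * c j))"
proof -
  note ev = assms(1) and n4 = assms(2) and pn = assms(3)
  define x where "x = R n (\<lambda>j. p * c j) c"
  define P where "P k = (\<Prod>j = 1..k. 2 * (p * c j))" for k
  define Q where "Q k = (\<Prod>j = 1..k. c j)" for k
  have p5: "p \<ge> 5" using pn n4 by linarith
  have cpos: "c j \<ge> 1" if "j \<ge> 1" for j
    using that
  proof (induction j)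
    case 0 then show ?case by simp
  next
    case (Suc j)
    show ?case
    proof (cases "j = 0")
      case True then show ?thesis using assms(4) by simp
    next
      case False
      then have "c j \<ge> 1" using Suc by simp
      moreover have "p ^ 2 \<ge> 1" using p5 by (simp add: one_le_power)
      moreover have "1 * 1 \<le> p ^ 2 * c j" using calculation by (intro mult_mono) auto
      ultimately show ?thesis using assms(5)[of j] False by simp
    qed
  qed
  have cbig: "c j \<ge> p ^ 2" if "j \<ge> 2" for j
  proof -
    define i where "i = j - 1"
    have i: "j = Suc i" "i \<ge> 1" using that unfolding i_def by auto
    have "c j = p ^ 2 * c i" using assms(5) i by simp
    moreover have "c i \<ge> 1" using cpos i by simp
    moreover have "p ^ 2 \<ge> 0" by simp
    moreover have "p ^ 2 * 1 \<le> p ^ 2 * c i" using calculation(2) by (intro mult_left_mono) auto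
    ultimately show ?thesis by simp
  qed
  have Ppos: "P k > 0" for k
    unfolding P_def
  proof (intro prod_pos)
    fix j assume "j \<in> {1..k}"
    then have "c j \<ge> 1" using cpos by simp
    then show "0 < 2 * (p * c j)" using p5 by simp
  qed
  have Qpos: "Q k > 0" for k
    unfolding Q_def
  proof (intro prod_pos)
    fix j assume "j \<in> {1..k}"
    then have "c j \<ge> 1" using cpos by simp
    then show "0 < c j" by simp
  qed
  have xSuc: "x (Suc k) s = (\<Sum>j<n. x k j * th n (p * c (Suc k)) (c (Suc k)) j s)" if "s < n" for k s
    unfolding x_def using RSuc[OF that] by simp
  have x0: "x 0 s = 1" if "s < n" for s unfolding x_def using R0 that by simp
  have n1: "n - 1 < n" "0 < n" using n4 by auto
  have inv: "(\<forall>s<n. x k s \<ge> 0) \<and> x k 0 \<ge> 1 \<and> x k (n - 1) \<ge> Q k \<and> (k \<ge> 1 \<longrightarrow> (\<forall>s<n. x k s \<le> 2 * P k))" for k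
  proof (induction k)
    case 0 then show ?case using x0 n1 by (simp add: Q_def)
  next
    case (Suc k)
    have IH1: "\<And>j. j < n \<Longrightarrow> x k j \<ge> 0" using Suc by auto
    have cS: "c (Suc k) \<ge> 1" using cpos by simp
    have aS: "p * c (Suc k) \<ge> 0" using cS p5 by simp
    have A: "\<forall>s<n. x (Suc k) s \<ge> 0"
      using xSuc sum_nonneg_x[OF ev n4 _ aS _ IH1] cS by simp
    have B: "x (Suc k) 0 \<ge> 1"
      using xSuc[OF n1(2)] col0_sum[OF ev n4] Suc IH1[OF n1(1)] by simp
    have C: "x (Suc k) (n - 1) \<ge> Q (Suc k)"
    proof -
      have "x (Suc k) (n - 1) \<ge> (c (Suc k) + 1) * x k (n - 1)"
        using xSuc[OF n1(1)] last_lower[of n "p * c (Suc k)" "c (Suc k)" "x k"] ev n4 aS IH1 cS by simp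
      moreover have "(c (Suc k) + 1) * x k (n - 1) \<ge> c (Suc k) * Q k"
        using Suc cS Qpos[of k] by (intro mult_mono) auto
      ultimately show ?thesis unfolding Q_def by (simp add: prodSuc mult.commute)
    qed
    have D: "\<forall>s<n. x (Suc k) s \<le> 2 * P (Suc k)"
    proof (intro allI impI)
      fix s assume s: "s < n"
      show "x (Suc k) s \<le> 2 * P (Suc k)"
      proof (cases "k = 0")
        case True
        have le1: "\<And>j. j < n \<Longrightarrow> x k j \<le> 1" using True x0 by simp
        have "x (Suc k) s \<le> 1 * (p * c 1 + 2 * c 1 + 2 * int n + 3)"
          using xSuc[OF s] gen_upper[OF ev n4 s aS cS IH1 le1] True by simp
        moreover have "p * c 1 + 2 * c 1 + 2 * int n + 3 \<le> 4 * (p * c 1)"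
        proof -
          have c1: "c 1 \<ge> 1" using cpos by simp
          have "p * c 1 \<ge> p" using mult_left_mono[of 1 "c 1" p] c1 p5 by simp
          moreover have "p * c 1 \<ge> 5 * c 1" using mult_right_mono[of 5 p "c 1"] c1 p5 by simp
          ultimately show ?thesis using c1 pn by linarith
        qed
        ultimately show ?thesis using True by (simp add: P_def)
      next
        case False
        have leP: "\<And>j. j < n \<Longrightarrow> x k j \<le> 2 * P k" using Suc False by auto
        have "x (Suc k) s \<le> 2 * P k * (p * c (Suc k) + 2 * c (Suc k) + 2 * int n + 3)"
          using xSuc[OF s] gen_upper[OF ev n4 s aS cS IH1 leP] by simp
        moreover have "p * c (Suc k) + 2 * c (Suc k) + 2 * int n + 3 \<le> 2 * (p * c (Suc k))"
        proof -
          have cb: "c (Suc k) \<ge> p ^ 2" using cbig False by simp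
          have "p * c (Suc k) \<ge> 5 * c (Suc k)" using mult_right_mono[of 5 p "c (Suc k)"] cS p5 by simp
          moreover have "p ^ 2 \<ge> p" using p5 mult_left_mono[of 1 p p] by (simp add: power2_eq_square)
          ultimately show ?thesis using cb pn by linarith
        qed
        moreover have "2 * P k * (p * c (Suc k) + 2 * c (Suc k) + 2 * int n + 3) \<le> 2 * P k * (2 * (p * c (Suc k)))"
          using calculation(2) Ppos[of k] by (intro mult_left_mono) auto
        moreover have "2 * P (Suc k) = 2 * P k * (2 * (p * c (Suc k)))" by (simp add: P_def prodSuc mult_ac)
        ultimately show ?thesis by linarith
      qed
    qed
    show ?case using A B C D by simp
  qed
  obtain m where km: "k = Suc m" using assms(6) by (cases k) auto
  have b1: "bval n (\<lambda>j. p * c j) c k 1 = x k 0" using bval_R[of 1 n] n4 unfolding x_def by simp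
  have bn: "bval n (\<lambda>j. p * c j) c k n = x k (n - 1)" using bval_R[of n n] n4 unfolding x_def by simp
  have cS: "c (Suc m) \<ge> 1" using cpos by simp
  have aS: "p * c (Suc m) \<ge> 0" using cS p5 by simp
  have pcS: "p * c (Suc m) \<ge> 5 * c (Suc m)" using mult_right_mono[of 5 p "c (Suc m)"] cS p5 by simp
  have pcS2: "p * c (Suc m) \<ge> (int n + 1) * c (Suc m)" using mult_right_mono[of "int n + 1" p "c (Suc m)"] cS pn by simp
  have pc5: "p * c (Suc m) \<ge> 5" using pcS cS by linarith
  have IH1: "\<And>j. j < n \<Longrightarrow> x m j \<ge> 0" using inv by auto
  have Pk: "P k = P m * (2 * (p * c (Suc m)))" unfolding km P_def by (simp add: prodSuc)
  have Qk: "Q k = Q m * c (Suc m)" unfolding km Q_def by (simp add: prodSuc)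
  have x0eq: "x k 0 = x m 0 + x m (n - 1)"
    using xSuc[OF n1(2), of m] col0_sum[OF ev n4] km by simp
  have L1: "Q m < x k 0" using x0eq inv[of m] by simp
  have U1: "x k 0 < P k"
  proof (cases "m = 0")
    case True
    then have "x k 0 = 2" using x0eq x0 n1 by simp
    moreover have "P k = 2 * (p * c (Suc m))" using Pk True P_def by simp
    ultimately show ?thesis using pcS cS by linarith
  next
    case False
    then have "x m 0 \<le> 2 * P m" "x m (n - 1) \<le> 2 * P m" using inv[of m] n1 by auto
    moreover have "P m * 4 < P m * (2 * (p * c (Suc m)))"
      using Ppos[of m] pc5 by (intro mult_strict_left_mono) auto
    ultimately show ?thesis using x0eq Pk by linarith
  qed
  have Ln: "Q k < x k (n - 1)"
  proof -
    have "x k (n - 1) \<ge> (c (Suc m) + 1) * x m (n - 1)"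
      using xSuc[OF n1(1), of m] last_lower[of n "p * c (Suc m)" "c (Suc m)" "x m"] ev n4 aS IH1 cS km by simp
    moreover have "(c (Suc m) + 1) * x m (n - 1) \<ge> (c (Suc m) + 1) * Q m"
      using inv[of m] cS by (intro mult_left_mono) auto
    moreover have "(c (Suc m) + 1) * Q m > c (Suc m) * Q m" using Qpos[of m] by (simp add: algebra_simps)
    ultimately show ?thesis using Qk by (simp add: mult.commute)
  qed
  have Un: "x k (n - 1) < P k"
  proof (cases "m = 0")
    case True
    have le1: "\<And>j. j < n \<Longrightarrow> x m j \<le> 1" using True x0 by simp
    have "x k (n - 1) \<le> 1 * int n * (c (Suc m) + 1)"
      using xSuc[OF n1(1), of m] last_upper[of n "p * c (Suc m)" "c (Suc m)" "x m" 1] ev n4 aS cS IH1 le1 km by simp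
    moreover have "int n * c (Suc m) \<ge> int n" using mult_left_mono[of 1 "c (Suc m)" "int n"] cS by simp
    moreover have "P k = 2 * (p * c (Suc m))" using Pk True P_def by simp
    ultimately show ?thesis using pcS2 cS by (simp add: algebra_simps)
  next
    case False
    have leP: "\<And>j. j < n \<Longrightarrow> x m j \<le> 2 * P m" using inv[of m] False by auto
    have "x k (n - 1) \<le> 2 * P m * int n * (c (Suc m) + 1)"
      using xSuc[OF n1(1), of m] last_upper[of n "p * c (Suc m)" "c (Suc m)" "x m" "2 * P m"] ev n4 aS cS IH1 leP km by simp
    moreover have "int n * (c (Suc m) + 1) < p * c (Suc m)"
    proof -
      have "c (Suc m) \<ge> p ^ 2" using cbig False by simp
      moreover have "p ^ 2 \<ge> p" using p5 mult_left_mono[of 1 p p] by (simp add: power2_eq_square)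
      ultimately show ?thesis using pcS2 pn by (simp add: algebra_simps)
    qed
    moreover have "2 * P m * (int n * (c (Suc m) + 1)) < 2 * P m * (p * c (Suc m))"
      using calculation(2) Ppos[of m] by (intro mult_strict_left_mono) auto
    ultimately show ?thesis using Pk by (simp add: mult_ac)
  qed
  show ?thesis using L1 U1 Ln Un b1 bn km unfolding P_def Q_def by simp
qed
end
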